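(* Let $T$ be an $\omega_1$-tree that is not special. Suppose that for every node $u\in T$ of limit height a set $C(T,u)\subseteq\{t\in T:t<u\}$ of order type $\omega$, cofinal below $u$, is given. Let $C\subseteq\omega_1$ be a club. Then there exist $\alpha\in C$, a node $v\in T^\alpha$, and nodes $\{u_n:n\in\omega\}$ of limit height with $v< u_n$ for all $n$, such that the set $\bigcup_{n\in\omega}C(T,u_n)\cap\{t\in T:t<v\}$ is infinite.
   Context: An $\omega_1$-tree is a tree of height $\omega_1$ all of whose levels $T^\alpha$ (nodes of height $\alpha$) are countable. $T$ is special if it is a union of countably many antichains. A club is a closed unbounded subset of $\omega_1$. *)

theory Defs
  imports Main "HOL-Library.Countable_Set"
begin

text \<open>The type 'w of countable ordinals: an uncountable well-order all of whose
proper initial segments are countable (this characterises omega_1 up to isomorphism).\<close>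
definition omega1_type :: "'w::wellorder itself \<Rightarrow> bool" where
  "omega1_type _ \<longleftrightarrow> uncountable (UNIV :: 'w set) \<and> (\<forall>x::'w. countable {y. y < x})"

definition limit_ord :: "'w::wellorder \<Rightarrow> bool" where
  "limit_ord \<alpha> \<longleftrightarrow> (\<exists>\<beta>. \<beta> < \<alpha>) \<and> (\<forall>\<beta><\<alpha>. \<exists>\<gamma>. \<beta> < \<gamma> \<and> \<gamma> < \<alpha>)"

definition club :: "'w::wellorder set \<Rightarrow> bool" where
  "club C \<longleftrightarrow> (\<forall>\<beta>. \<exists>\<gamma>\<in>C. \<beta> \<le> \<gamma>) \<and>
     (\<forall>\<beta>. (\<exists>\<delta>\<in>C. \<delta> < \<beta>) \<and> (\<forall>\<gamma><\<beta>. \<exists>\<delta>\<in>C. \<gamma> < \<delta> \<and> \<delta> < \<beta>) \<longrightarrow> \<beta> \<in> C)"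

text \<open>A tree (T, lt) with height function ht into 'w: lt is a strict partial order on T,
the predecessors of each node are linearly ordered, and ht restricted to the predecessors
of t is an order isomorphism onto {beta. beta < ht t}; hence predecessors are well ordered
and ht t is the height (order type of the predecessors) of t.\<close>
definition tree_ht :: "'a set \<Rightarrow> ('a \<Rightarrow> 'a \<Rightarrow> bool) \<Rightarrow> ('a \<Rightarrow> 'w::wellorder) \<Rightarrow> bool" where
  "tree_ht T lt ht \<longleftrightarrow>
     (\<forall>x\<in>T. \<not> lt x x) \<and>
     (\<forall>x\<in>T. \<forall>y\<in>T. \<forall>z\<in>T. lt x y \<longrightarrow> lt y z \<longrightarrow> lt x z) \<and>
     (\<forall>t\<in>T. \<forall>x\<in>T. \<forall>y\<in>T. lt x t \<longrightarrow> lt y t \<longrightarrow> x = y \<or> lt x y \<or> lt y x) \<and>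
     (\<forall>x\<in>T. \<forall>y\<in>T. lt x y \<longrightarrow> ht x < ht y) \<and>
     (\<forall>t\<in>T. \<forall>\<beta>. \<beta> < ht t \<longrightarrow> (\<exists>s\<in>T. lt s t \<and> ht s = \<beta>))"

definition omega1_tree :: "'a set \<Rightarrow> ('a \<Rightarrow> 'a \<Rightarrow> bool) \<Rightarrow> ('a \<Rightarrow> 'w::wellorder) \<Rightarrow> bool" where
  "omega1_tree T lt ht \<longleftrightarrow> tree_ht T lt ht \<and>
     (\<forall>\<alpha>. {t\<in>T. ht t = \<alpha>} \<noteq> {} \<and> countable {t\<in>T. ht t = \<alpha>})"

definition antichain :: "('a \<Rightarrow> 'a \<Rightarrow> bool) \<Rightarrow> 'a set \<Rightarrow> bool" where
  "antichain lt A \<longleftrightarrow> (\<forall>x\<in>A. \<forall>y\<in>A. \<not> lt x y)"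

definition special :: "'a set \<Rightarrow> ('a \<Rightarrow> 'a \<Rightarrow> bool) \<Rightarrow> bool" where
  "special T lt \<longleftrightarrow> (\<exists>A :: nat \<Rightarrow> 'a set. T = (\<Union>n. A n) \<and> (\<forall>n. antichain lt (A n)))"

definition otype_omega :: "('a \<Rightarrow> 'a \<Rightarrow> bool) \<Rightarrow> 'a set \<Rightarrow> bool" where
  "otype_omega lt X \<longleftrightarrow> (\<exists>f :: nat \<Rightarrow> 'a. bij_betw f UNIV X \<and> (\<forall>m n. m < n \<longrightarrow> lt (f m) (f n)))"

end

theory Submission
  imports Defs
begin

lemma special_of_regressive:
  fixes T :: "'a set" and lt :: "'a \<Rightarrow> 'a \<Rightarrow> bool" and ht :: "'a \<Rightarrow> 'w::wellorder"
    and f :: "'a \<Rightarrow> 'a" and h :: "'a \<Rightarrow> nat" and z :: 'w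
  assumes tr: "tree_ht T lt ht"
    and zl: "\<And>x. z \<le> x"
    and fT: "\<And>t. t\<in>T \<Longrightarrow> ht t \<noteq> z \<Longrightarrow> f t \<in> T \<and> lt (f t) t"
    and hf: "\<And>t t'. t\<in>T \<Longrightarrow> t'\<in>T \<Longrightarrow> ht t \<noteq> z \<Longrightarrow> ht t' \<noteq> z \<Longrightarrow> lt t t'
              \<Longrightarrow> f t = f t' \<Longrightarrow> h t \<noteq> h t'"
  shows "special T lt"
proof -
  have irr: "\<And>x. x\<in>T \<Longrightarrow> \<not> lt x x"
   and lin: "\<And>t x y. t\<in>T \<Longrightarrow> x\<in>T \<Longrightarrow> y\<in>T \<Longrightarrow> lt x t \<Longrightarrow> lt y t \<Longrightarrow> x = y \<or> lt x y \<or> lt y x"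
   and trn: "\<And>x y w. x\<in>T \<Longrightarrow> y\<in>T \<Longrightarrow> w\<in>T \<Longrightarrow> lt x y \<Longrightarrow> lt y w \<Longrightarrow> lt x w"
   and hts: "\<And>x y. x\<in>T \<Longrightarrow> y\<in>T \<Longrightarrow> lt x y \<Longrightarrow> ht x < ht y"
    using tr unfolding tree_ht_def by blast+
  define R where "R = inv_image {(x::'w, y). x < y} ht"
  have wfR: "wf R" unfolding R_def by (rule wf_inv_image) (rule wellorder_class.wf)
  define F where "F = (\<lambda>c t. if t \<in> T \<and> ht t \<noteq> z then h t # c (f t) else ([]::nat list))"
  define c where "c = wfrec R F"
  have ceq: "c t = h t # c (f t)" if "t\<in>T" "ht t \<noteq> z" for t
  proof -
    have "c t = F (cut c R t) t" unfolding c_def by (rule wfrec[OF wfR])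
    moreover have "(f t, t) \<in> R" using fT[OF that] hts that unfolding R_def by auto
    ultimately show ?thesis using that unfolding F_def by (simp add: cut_apply)
  qed
  have c0: "c t = []" if "ht t = z" for t
  proof -
    have "c t = F (cut c R t) t" unfolding c_def by (rule wfrec[OF wfR])
    then show ?thesis using that unfolding F_def by simp
  qed
  have nz: "ht t' \<noteq> z" if "t\<in>T" "t'\<in>T" "lt t t'" for t t'
    using hts[OF that] zl[of "ht t"] by auto
  have main: "\<forall>t t'. t\<in>T \<longrightarrow> t'\<in>T \<longrightarrow> lt t t' \<longrightarrow> length (c t) = n \<longrightarrow> c t \<noteq> c t'" for n
  proof (induction n)
    case 0
    show ?case
    proof (intro allI impI)
      fix t t' assume a: "t\<in>T" "t'\<in>T" "lt t t'" "length (c t) = 0"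
      have "c t' \<noteq> []" using ceq[OF a(2) nz[OF a(1-3)]] by simp
      then show "c t \<noteq> c t'" using a(4) by simp
    qed
  next
    case (Suc n)
    show ?case
    proof (intro allI impI notI)
      fix t t' assume a: "t\<in>T" "t'\<in>T" "lt t t'" "length (c t) = Suc n" and eq: "c t = c t'"
      have nzt: "ht t \<noteq> z" using a(4) c0 by force
      have nzt': "ht t' \<noteq> z" using nz[OF a(1-3)] .
      have e1: "h t = h t'" and e2: "c (f t) = c (f t')"
        using eq ceq[OF a(1) nzt] ceq[OF a(2) nzt'] by auto
      have ln: "length (c (f t)) = n" using a(4) ceq[OF a(1) nzt] by simp
      have ft: "f t \<in> T" "lt (f t) t" using fT[OF a(1) nzt] by auto
      have ft': "f t' \<in> T" "lt (f t') t'" using fT[OF a(2) nzt'] by auto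
      have ftt': "lt (f t) t'" using trn[OF ft(1) a(1) a(2) ft(2) a(3)] .
      show False
      proof (cases "f t = f t'")
        case True
        then show False using hf[OF a(1) a(2) nzt nzt' a(3)] e1 by simp
      next
        case False
        then have "lt (f t) (f t') \<or> lt (f t') (f t)" using lin[OF a(2) ft(1) ft'(1) ftt' ft'(2)] by auto
        then show False
        proof
          assume "lt (f t) (f t')"
          then show False using Suc.IH ft(1) ft'(1) ln e2 by blast
        next
          assume "lt (f t') (f t)"
          then show False using Suc.IH ft(1) ft'(1) ln e2 by (metis)
        qed
      qed
    qed
  qed
  define A where "A = (\<lambda>n. {t\<in>T. to_nat (c t) = n})"
  have "T = (\<Union>n. A n)" unfolding A_def by auto
  moreover have "antichain lt (A n)" for n
    unfolding antichain_def A_def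
  proof (intro ballI notI)
    fix x y assume "x \<in> {t \<in> T. to_nat (c t) = n}" "y \<in> {t \<in> T. to_nat (c t) = n}" "lt x y"
    then show False using main[of "length (c x)"] by (auto dest: injD[OF inj_to_nat]) (metis)
  qed
  ultimately show ?thesis unfolding special_def by blast
qed


theorem mainTheorem4:
  fixes T :: "'a set" and lt :: "'a \<Rightarrow> 'a \<Rightarrow> bool" and ht :: "'a \<Rightarrow> 'w::wellorder"
    and CT :: "'a \<Rightarrow> 'a set" and C :: "'w set"
  assumes "omega1_type TYPE('w)"
    and "omega1_tree T lt ht"
    and "\<not> special T lt"
    and "\<forall>u\<in>T. limit_ord (ht u) \<longrightarrow>
           CT u \<subseteq> {t\<in>T. lt t u} \<and> otype_omega lt (CT u) \<and>
           (\<forall>s\<in>T. lt s u \<longrightarrow> (\<exists>c\<in>CT u. s = c \<or> lt s c))"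
    and "club C"
  shows "\<exists>\<alpha>\<in>C. \<exists>v\<in>T. ht v = \<alpha> \<and>
           (\<exists>u :: nat \<Rightarrow> 'a. (\<forall>n. u n \<in> T \<and> limit_ord (ht (u n)) \<and> lt v (u n)) \<and>
              infinite ((\<Union>n. CT (u n)) \<inter> {t\<in>T. lt t v}))"
proof (rule ccontr)
  assume neg: "\<not> ?thesis"
  note om = assms(1)[unfolded omega1_type_def]
  have tr: "tree_ht T lt ht" using assms(2) unfolding omega1_tree_def by blast
  have irr: "\<And>x. x\<in>T \<Longrightarrow> \<not> lt x x"
   and lin: "\<And>t x y. t\<in>T \<Longrightarrow> x\<in>T \<Longrightarrow> y\<in>T \<Longrightarrow> lt x t \<Longrightarrow> lt y t \<Longrightarrow> x = y \<or> lt x y \<or> lt y x"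
   and trn: "\<And>x y w. x\<in>T \<Longrightarrow> y\<in>T \<Longrightarrow> w\<in>T \<Longrightarrow> lt x y \<Longrightarrow> lt y w \<Longrightarrow> lt x w"
   and hts: "\<And>x y. x\<in>T \<Longrightarrow> y\<in>T \<Longrightarrow> lt x y \<Longrightarrow> ht x < ht y"
   and below: "\<And>t \<beta>. t\<in>T \<Longrightarrow> \<beta> < ht t \<Longrightarrow> \<exists>s\<in>T. lt s t \<and> ht s = \<beta>"
    using tr unfolding tree_ht_def by blast+
  have CTs: "\<And>u. u\<in>T \<Longrightarrow> limit_ord (ht u) \<Longrightarrow> CT u \<subseteq> {t\<in>T. lt t u}"
   and CTo: "\<And>u. u\<in>T \<Longrightarrow> limit_ord (ht u) \<Longrightarrow> otype_omega lt (CT u)"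
   and CTc: "\<And>u s. u\<in>T \<Longrightarrow> limit_ord (ht u) \<Longrightarrow> s\<in>T \<Longrightarrow> lt s u \<Longrightarrow> \<exists>c\<in>CT u. s = c \<or> lt s c"
    using assms(4) by blast+
  have unb: "\<And>\<beta>. \<exists>\<gamma>\<in>C. \<beta> \<le> \<gamma>"
   and cls: "\<And>\<beta>. (\<exists>\<delta>\<in>C. \<delta> < \<beta>) \<Longrightarrow> (\<forall>\<gamma><\<beta>. \<exists>\<delta>\<in>C. \<gamma> < \<delta> \<and> \<delta> < \<beta>) \<Longrightarrow> \<beta> \<in> C"
    using assms(5) unfolding club_def by blast+
  define z :: 'w where "z = (LEAST x. True)"
  have zl: "\<And>x. z \<le> x" unfolding z_def by (rule Least_le) simp
  define S where "S = (\<lambda>t. {x\<in>T. lt x t \<and> (\<exists>u\<in>T. limit_ord (ht u) \<and> lt t u \<and> x \<in> CT u)})"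
  have predcnt: "countable {x\<in>T. lt x t}" if "t\<in>T" for t
  proof (rule countable_image_inj_on[of ht])
    show "countable (ht ` {x\<in>T. lt x t})"
      by (rule countable_subset[OF _ om[THEN conjunct2, rule_format, of "ht t"]])
         (use hts that in auto)
    show "inj_on ht {x\<in>T. lt x t}"
    proof (rule inj_onI)
      fix x y assume "x \<in> {x\<in>T. lt x t}" "y \<in> {x\<in>T. lt x t}" "ht x = ht y"
      then show "x = y" using lin[OF that, of x y] hts by fastforce
    qed
  qed
  have Sfin: "finite (S t)" if t: "t\<in>T" "ht t \<in> C" for t
  proof (rule ccontr)
    assume inf: "infinite (S t)"
    then have ne: "S t \<noteq> {}" by auto
    have cS: "countable (S t)" by (rule countable_subset[OF _ predcnt[OF t(1)]]) (auto simp: S_def)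
    define e where "e = from_nat_into (S t)"
    have re: "range e = S t" unfolding e_def using ne cS by simp
    define w where "w = (\<lambda>x. SOME u. u\<in>T \<and> limit_ord (ht u) \<and> lt t u \<and> x \<in> CT u)"
    have wP: "w x \<in> T \<and> limit_ord (ht (w x)) \<and> lt t (w x) \<and> x \<in> CT (w x)" if "x \<in> S t" for x
      unfolding w_def by (rule someI_ex) (use that in \<open>auto simp: S_def\<close>)
    have "S t \<subseteq> (\<Union>n. CT (w (e n))) \<inter> {s\<in>T. lt s t}"
    proof
      fix x assume x: "x \<in> S t"
      then obtain n where "x = e n" using re by blast
      then show "x \<in> (\<Union>n. CT (w (e n))) \<inter> {s\<in>T. lt s t}" using wP[OF x] x by (auto simp: S_def)
    qed
    then have "infinite ((\<Union>n. CT (w (e n))) \<inter> {s\<in>T. lt s t})" using inf finite_subset by blast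
    moreover have "\<forall>n. w (e n) \<in> T \<and> limit_ord (ht (w (e n))) \<and> lt t (w (e n))"
      using wP re by blast
    ultimately have "\<exists>u :: nat \<Rightarrow> 'a. (\<forall>n. u n \<in> T \<and> limit_ord (ht (u n)) \<and> lt t (u n)) \<and>
              infinite ((\<Union>n. CT (u n)) \<inter> {s\<in>T. lt s t})"
      by (intro exI[of _ "\<lambda>n. w (e n)"]) simp
    then show False using neg t by blast
  qed
  define \<phi> where "\<phi> = (\<lambda>\<delta>::'w. LEAST \<beta>. \<forall>\<gamma>\<in>C. \<gamma> < \<delta> \<longrightarrow> \<gamma> \<le> \<beta>)"
  have phub: "\<forall>\<gamma>\<in>C. \<gamma> < \<delta> \<longrightarrow> \<gamma> \<le> \<phi> \<delta>" for \<delta>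
    unfolding \<phi>_def by (rule LeastI[of _ \<delta>]) auto
  have phle: "\<phi> \<delta> \<le> \<delta>" for \<delta> unfolding \<phi>_def by (rule Least_le) auto
  have phlt: "\<phi> \<delta> < \<delta>" if "\<delta> \<noteq> z" "\<not> (limit_ord \<delta> \<and> \<delta> \<in> C)" for \<delta>
  proof (rule ccontr)
    assume "\<not> \<phi> \<delta> < \<delta>"
    then have eq: "\<phi> \<delta> = \<delta>" using phle[of \<delta>] by auto
    have nb: "\<exists>\<gamma>\<in>C. \<beta> < \<gamma> \<and> \<gamma> < \<delta>" if "\<beta> < \<delta>" for \<beta>
    proof -
      have "\<not> (\<forall>\<gamma>\<in>C. \<gamma> < \<delta> \<longrightarrow> \<gamma> \<le> \<beta>)"
        using not_less_Least[of \<beta> "\<lambda>\<beta>. \<forall>\<gamma>\<in>C. \<gamma> < \<delta> \<longrightarrow> \<gamma> \<le> \<beta>"] that eq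
        unfolding \<phi>_def by auto
      then show ?thesis by (auto simp: not_le)
    qed
    have zd: "z < \<delta>" using zl[of \<delta>] that(1) by auto
    have "limit_ord \<delta>" unfolding limit_ord_def using zd nb by blast
    moreover have "\<delta> \<in> C" using nb[OF zd] nb by (intro cls) auto
    ultimately show False using that(2) by blast
  qed
  have phcnt: "countable {\<delta>. \<phi> \<delta> = \<beta>}" for \<beta>
  proof -
    have "countable {y. y \<le> \<beta>}"
    proof -
      have "{y. y \<le> \<beta>} = insert \<beta> {y. y < \<beta>}" by auto
      then show ?thesis using om by simp
    qed
    then obtain y where "\<not> y \<le> \<beta>" using om by (metis UNIV_eq_I mem_Collect_eq)
    then have yb: "\<beta> < y" by simp
    obtain m where m: "m \<in> C" "y \<le> m" using unb by blast
    have "{\<delta>. \<phi> \<delta> = \<beta>} \<subseteq> insert m {x. x < m}"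
    proof
      fix \<delta> assume "\<delta> \<in> {\<delta>. \<phi> \<delta> = \<beta>}"
      then have "\<phi> \<delta> = \<beta>" by simp
      then have "\<not> m < \<delta>" using phub[of \<delta>] m yb by force
      then show "\<delta> \<in> insert m {x. x < m}" by auto
    qed
    then show ?thesis using om countable_subset by (metis countable_insert)
  qed
  define L where "L = (\<lambda>t. limit_ord (ht t) \<and> ht t \<in> C)"
  define f where "f = (\<lambda>t. if L t then (SOME c. c \<in> CT t \<and> (\<forall>x\<in>S t. lt x c))
                           else (SOME s. s\<in>T \<and> lt s t \<and> ht s = \<phi> (ht t)))"
  define h where "h = (\<lambda>t. if L t then (0::nat) else Suc (to_nat_on {\<delta>. \<phi> \<delta> = \<phi> (ht t)} (ht t)))"
  have fL: "f t \<in> CT t \<and> (\<forall>x\<in>S t. lt x (f t))" if t: "t\<in>T" "L t" for t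
  proof -
    have lim: "limit_ord (ht t)" and inC: "ht t \<in> C" using t(2) unfolding L_def by auto
    have "\<exists>c. c \<in> CT t \<and> (\<forall>x\<in>S t. lt x c)"
    proof (cases "S t = {}")
      case True
      obtain g :: "nat \<Rightarrow> 'a" where "bij_betw g UNIV (CT t)"
        using CTo[OF t(1) lim] unfolding otype_omega_def by blast
      then have "g 0 \<in> CT t" using bij_betwE by blast
      then show ?thesis using True by blast
    next
      case False
      define \<beta> where "\<beta> = Max (ht ` S t)"
      have fin: "finite (ht ` S t)" using Sfin[OF t(1) inC] by simp
      have bS: "\<beta> \<in> ht ` S t" unfolding \<beta>_def using fin False by (intro Max_in) auto
      have bl: "\<beta> < ht t" using bS hts t(1) by (auto simp: S_def)
      obtain \<gamma> where g: "\<beta> < \<gamma>" "\<gamma> < ht t" using lim bl unfolding limit_ord_def by blast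
      obtain s where s: "s\<in>T" "lt s t" "ht s = \<gamma>" using below[OF t(1) g(2)] by blast
      obtain c where c: "c \<in> CT t" "s = c \<or> lt s c" using CTc[OF t(1) lim s(1,2)] by blast
      have cT: "c \<in> T" using c(1) CTs[OF t(1) lim] by blast
      have "lt x c" if x: "x \<in> S t" for x
      proof -
        have xT: "x \<in> T" "lt x t" using x by (auto simp: S_def)
        have "ht x \<le> \<beta>" unfolding \<beta>_def using fin x by simp
        then have hx: "ht x < ht s" using g s by simp
        have "lt x s" using lin[OF t(1) xT(1) s(1) xT(2) s(2)] hx hts[OF s(1) xT(1)] by auto
        then show ?thesis using c(2) trn[OF xT(1) s(1) cT] by auto
      qed
      then show ?thesis using c(1) by blast
    qed
    then have "(SOME c. c \<in> CT t \<and> (\<forall>x\<in>S t. lt x c)) \<in> CT t \<and> (\<forall>x\<in>S t. lt x (SOME c. c \<in> CT t \<and> (\<forall>x\<in>S t. lt x c)))"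
      by (rule someI_ex[of "\<lambda>c. c \<in> CT t \<and> (\<forall>x\<in>S t. lt x c)"])
    then show ?thesis unfolding f_def using t(2) by simp
  qed
  have fN: "f t \<in> T \<and> lt (f t) t \<and> ht (f t) = \<phi> (ht t)" if t: "t\<in>T" "\<not> L t" "ht t \<noteq> z" for t
  proof -
    have "\<phi> (ht t) < ht t" using phlt[OF t(3)] t(2) unfolding L_def by blast
    then have "\<exists>s. s\<in>T \<and> lt s t \<and> ht s = \<phi> (ht t)" using below[OF t(1)] by blast
    then have "(SOME s. s\<in>T \<and> lt s t \<and> ht s = \<phi> (ht t)) \<in> T \<and> lt (SOME s. s\<in>T \<and> lt s t \<and> ht s = \<phi> (ht t)) t \<and> ht (SOME s. s\<in>T \<and> lt s t \<and> ht s = \<phi> (ht t)) = \<phi> (ht t)"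
      by (rule someI_ex[of "\<lambda>s. s\<in>T \<and> lt s t \<and> ht s = \<phi> (ht t)"])
    then show ?thesis unfolding f_def using t(2) by simp
  qed
  have "special T lt"
  proof (rule special_of_regressive[OF tr zl])
    fix t assume t: "t\<in>T" "ht t \<noteq> z"
    show "f t \<in> T \<and> lt (f t) t"
    proof (cases "L t")
      case True
      then have "limit_ord (ht t)" unfolding L_def by blast
      then show ?thesis using fL[OF t(1) True] CTs[OF t(1)] by blast
    next
      case False
      then show ?thesis using fN[OF t(1) False t(2)] by blast
    qed
  next
    fix t t' assume a: "t\<in>T" "t'\<in>T" "ht t \<noteq> z" "ht t' \<noteq> z" "lt t t'" "f t = f t'"
    show "h t \<noteq> h t'"
    proof (cases "L t")
      case Lt: True
      show ?thesis
      proof (cases "L t'")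
        case Lt': True
        have lim: "limit_ord (ht t)" "limit_ord (ht t')" using Lt Lt' unfolding L_def by auto
        have c1: "f t \<in> CT t" "\<forall>x\<in>S t. lt x (f t)" using fL[OF a(1) Lt] by auto
        have c2: "f t \<in> CT t'" using fL[OF a(2) Lt'] a(6) by auto
        have "f t \<in> T" "lt (f t) t" using c1(1) CTs[OF a(1) lim(1)] by auto
        then have "f t \<in> S t" unfolding S_def using a(2,5) lim(2) c2 by blast
        then have False using c1(2) irr \<open>f t \<in> T\<close> by blast
        then show ?thesis ..
      next
        case False
        then show ?thesis using Lt unfolding h_def by simp
      qed
    next
      case Lt: False
      show ?thesis
      proof (cases "L t'")
        case True
        then show ?thesis using Lt unfolding h_def by simp
      next
        case Lt': False
        have e: "\<phi> (ht t) = \<phi> (ht t')" using fN[OF a(1) Lt a(3)] fN[OF a(2) Lt' a(4)] a(6) by simp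
        have "ht t \<noteq> ht t'" using hts[OF a(1,2,5)] by simp
        then have "to_nat_on {\<delta>. \<phi> \<delta> = \<phi> (ht t)} (ht t) \<noteq> to_nat_on {\<delta>. \<phi> \<delta> = \<phi> (ht t)} (ht t')"
        proof -
          have i: "inj_on (to_nat_on {\<delta>. \<phi> \<delta> = \<phi> (ht t)}) {\<delta>. \<phi> \<delta> = \<phi> (ht t)}"
            by (rule inj_on_to_nat_on[OF phcnt])
          have m1: "ht t \<in> {\<delta>. \<phi> \<delta> = \<phi> (ht t)}" by simp
          have m2: "ht t' \<in> {\<delta>. \<phi> \<delta> = \<phi> (ht t)}" using e by simp
          show ?thesis by (rule inj_on_contraD[OF i \<open>ht t \<noteq> ht t'\<close> m1 m2])
        qed
        then show ?thesis using Lt Lt' e unfolding h_def by simp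
      qed
    qed
  qed
  then show False using assms(3) by blast
qed

end
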